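(* Let $(R,\mathfrak{m})$ be a finite local ring with residue field $\mathbb{F}_q$ and characteristic $p^N$. Consider a chain of subrings $R_{[\mathbb{F}_q]}=R_l\subseteq R_{l-1}\subseteq\cdots\subseteq R_1\subseteq R_0=R$. This chain is maximal (i.e. each $R_i$ is a maximal subring of $R_{i-1}$) if and only if $[R_{i-1}:R_i]=q$ for all $i=1,\dots,l$. Moreover, for such a maximal chain, $p^kR\subseteq R_k$ for every $k=0,1,\dots,l$.
   Context: All rings are commutative and unital. For a finite local ring $(R,\mathfrak{m})$ with residue field $\mathbb{F}_q$, $T(R)$ denotes the unique subgroup of $R^\times$ mapping isomorphically onto $\mathbb{F}_q^\times$ under reduction mod $\mathfrak{m}$ (Teichmuller units), and $R_{[\mathbb{F}_q]}$ denotes the $\mathbb{Z}/p^N\mathbb{Z}$-span of $T(R)$, which is the smallest subring of $R$ with residue field $\mathbb{F}_q$. Subrings of $R$ are local and their residue fields are naturally subfields of $\mathbb{F}_q$; indices are indices of additive groups. *)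

theory Defs
  imports Main "HOL-Computational_Algebra.Primes"
begin

text \<open>Rings are represented by a finite type of class comm_ring_1; R = UNIV.\<close>

definition is_ideal :: "'a::comm_ring_1 set \<Rightarrow> bool" where
  "is_ideal I \<longleftrightarrow> 0 \<in> I \<and> (\<forall>x\<in>I. \<forall>y\<in>I. x + y \<in> I) \<and> (\<forall>x\<in>I. - x \<in> I)
      \<and> (\<forall>r. \<forall>x\<in>I. r * x \<in> I)"

definition maximal_ideal :: "'a::comm_ring_1 set \<Rightarrow> bool" where
  "maximal_ideal M \<longleftrightarrow> is_ideal M \<and> M \<noteq> UNIV \<and>
      (\<forall>J. is_ideal J \<and> M \<subseteq> J \<longrightarrow> J = M \<or> J = UNIV)"

definition local_ring :: "'a::comm_ring_1 itself \<Rightarrow> bool" where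
  "local_ring _ \<longleftrightarrow> (\<exists>!M::'a set. maximal_ideal M)"

definition max_ideal :: "'a::comm_ring_1 set" where
  "max_ideal = (THE M. maximal_ideal M)"

definition is_subring :: "'a::comm_ring_1 set \<Rightarrow> bool" where
  "is_subring S \<longleftrightarrow> 1 \<in> S \<and> (\<forall>x\<in>S. \<forall>y\<in>S. x - y \<in> S \<and> x * y \<in> S)"

definition maximal_subring :: "'a::comm_ring_1 set \<Rightarrow> 'a set \<Rightarrow> bool" where
  "maximal_subring S T \<longleftrightarrow> is_subring S \<and> is_subring T \<and> S \<subset> T \<and>
      (\<forall>U. is_subring U \<and> S \<subseteq> U \<and> U \<subseteq> T \<longrightarrow> U = S \<or> U = T)"

definition add_index :: "'a set \<Rightarrow> 'a set \<Rightarrow> nat" where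
  "add_index A B = card A div card B"

text \<open>Teichmueller units: the unique subgroup of the unit group mapping
  isomorphically onto the units of the residue field under reduction mod m.\<close>
definition teichmuller :: "'a::comm_ring_1 set" where
  "teichmuller = (THE T.
      (\<forall>t\<in>T. t dvd 1) \<and> 1 \<in> T \<and> (\<forall>x\<in>T. \<forall>y\<in>T. x * y \<in> T) \<and>
      (\<forall>x\<in>T. \<exists>y\<in>T. x * y = 1) \<and>
      (\<forall>x\<in>T. \<forall>y\<in>T. x - y \<in> max_ideal \<longrightarrow> x = y) \<and>
      (\<forall>u. u \<notin> max_ideal \<longrightarrow> (\<exists>t\<in>T. u - t \<in> max_ideal)))"

text \<open>Z-span (equivalently Z/p^N-span) of a set.\<close>
definition int_span :: "'a::comm_ring_1 set \<Rightarrow> 'a set" where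
  "int_span A = {\<Sum>t\<in>F. of_int (c t) * t | F c. finite F \<and> F \<subseteq> A}"

definition teich_subring :: "'a::comm_ring_1 set" where
  "teich_subring = int_span teichmuller"

end

theory Submission
  imports Defs "HOL-Number_Theory.Number_Theory"
begin


lemma loc_max:
  assumes "local_ring TYPE('a::{comm_ring_1,finite})"
  shows "maximal_ideal (max_ideal::'a set)"
  using assms unfolding local_ring_def max_ideal_def by (rule theI')

lemma M_iff:
  assumes loc: "local_ring TYPE('a::{comm_ring_1,finite})"
  shows "(x::'a) \<in> max_ideal \<longleftrightarrow> \<not> x dvd 1"
proof
  assume xM: "x \<in> max_ideal"
  show "\<not> x dvd 1"
  proof
    assume "x dvd 1"
    then obtain y where y: "1 = x * y" by (auto elim: dvdE)
    have id: "is_ideal (max_ideal::'a set)" and ne: "(max_ideal::'a set) \<noteq> UNIV"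
      using loc_max[OF loc] unfolding maximal_ideal_def by auto
    have "1 \<in> (max_ideal::'a set)" using id xM y unfolding is_ideal_def by (metis mult.commute)
    hence "\<forall>r. r \<in> (max_ideal::'a set)" using id unfolding is_ideal_def by (metis mult.right_neutral)
    thus False using ne by auto
  qed
next
  assume nu: "\<not> x dvd 1"
  define I where "I = {r * x | r. True}"
  have idI: "is_ideal I" unfolding is_ideal_def I_def
    by (auto, metis mult_zero_left, metis distrib_right, metis minus_mult_left, metis mult.assoc)
  have "1 \<notin> I" using nu unfolding I_def by (auto simp: dvd_def mult.commute)
  define C where "C = {J::'a set. is_ideal J \<and> I \<subseteq> J \<and> J \<noteq> UNIV}"
  have "I \<in> C" using idI \<open>1 \<notin> I\<close> unfolding C_def by auto
  have fC: "finite C" by simp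
  obtain J where JC: "J \<in> C" and Jmax: "\<forall>J'\<in>C. card J' \<le> card J"
  proof -
    have "Max (card ` C) \<in> card ` C" using fC \<open>I \<in> C\<close> by (intro Max_in) auto
    then obtain J where "J \<in> C" "card J = Max (card ` C)" by auto
    moreover have "\<forall>J'\<in>C. card J' \<le> Max (card ` C)" using fC by auto
    ultimately show ?thesis using that by auto
  qed
  have mJ: "maximal_ideal J" unfolding maximal_ideal_def
  proof (intro conjI allI impI)
    show "is_ideal J" "J \<noteq> UNIV" using JC unfolding C_def by auto
  next
    fix J' assume a: "is_ideal J' \<and> J \<subseteq> J'"
    show "J' = J \<or> J' = UNIV"
    proof (cases "J' = UNIV")
      case False
      hence "J' \<in> C" using a JC unfolding C_def by auto
      hence "card J' \<le> card J" using Jmax by auto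
      hence "J' = J" using a by (metis card_seteq finite)
      thus ?thesis by simp
    qed simp
  qed
  have "J = max_ideal"
    using loc mJ loc_max[OF loc] unfolding local_ring_def by blast
  moreover have "x \<in> I" unfolding I_def by (auto intro: exI[of _ 1])
  ultimately show "x \<in> max_ideal" using JC unfolding C_def by auto
qed



context
  assumes loc: "local_ring TYPE('a::{comm_ring_1,finite})"
begin

abbreviation MM :: "'a set" where "MM \<equiv> max_ideal"

lemma idM: "is_ideal MM" using loc_max[OF loc] unfolding maximal_ideal_def by auto

lemma M_0: "0 \<in> MM" using idM unfolding is_ideal_def by auto
lemma M_add: "x \<in> MM \<Longrightarrow> y \<in> MM \<Longrightarrow> x + y \<in> MM" using idM unfolding is_ideal_def by auto
lemma M_uminus: "x \<in> MM \<Longrightarrow> - x \<in> MM" using idM unfolding is_ideal_def by auto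
lemma M_diff: "x \<in> MM \<Longrightarrow> y \<in> MM \<Longrightarrow> x - y \<in> MM"
  using M_add[of x "-y"] M_uminus[of y] by simp
lemma M_multl: "x \<in> MM \<Longrightarrow> r * x \<in> MM" using idM unfolding is_ideal_def by auto
lemma M_multr: "x \<in> MM \<Longrightarrow> x * r \<in> MM" by (metis M_multl mult.commute)
lemma M_unit: "x \<in> MM \<longleftrightarrow> \<not> x dvd 1" using M_iff[OF loc] .
lemma one_notin_M: "(1::'a) \<notin> MM" using M_unit by simp
lemma M_sum: "finite A \<Longrightarrow> (\<And>i. i \<in> A \<Longrightarrow> f i \<in> MM) \<Longrightarrow> sum f A \<in> MM"
  by (induction A rule: finite_induct) (auto intro: M_0 M_add)
lemma mult_notin_M: "x \<notin> MM \<Longrightarrow> y \<notin> MM \<Longrightarrow> x * y \<notin> MM"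
proof -
  assume "x \<notin> MM" "y \<notin> MM"
  hence "x dvd 1" "y dvd 1" using M_unit by auto
  hence "x * y dvd 1" using mult_dvd_mono[of x 1 y 1] by simp
  thus "x * y \<notin> MM" using M_unit by auto
qed
lemma power_notin_M: "x \<notin> MM \<Longrightarrow> x ^ n \<notin> MM"
  by (induction n) (auto simp: one_notin_M mult_notin_M)
lemma zero_ne_one': "(0::'a) \<noteq> 1" using M_0 one_notin_M by metis

lemma cong_power: "x - y \<in> MM \<Longrightarrow> x ^ n - y ^ n \<in> MM"
  by (simp add: power_diff_sumr2 M_multr)

lemma one_minus_M: assumes "u \<in> MM" shows "1 - u \<notin> MM"
proof
  assume "1 - u \<in> MM"
  hence "(1 - u) + u \<in> MM" using assms by (rule M_add)
  thus False using one_notin_M by simp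
qed

lemma nil_prod:
  assumes "set ws \<subseteq> MM" "length ws \<ge> card (UNIV::'a set)"
  shows "prod_list ws = 0"
proof -
  define n where "n = length ws"
  define P where "P i = prod_list (take i ws)" for i
  have "\<not> inj_on P {0..n}"
  proof
    assume "inj_on P {0..n}"
    hence "card (P ` {0..n}) = card {0..n}" by (rule card_image)
    moreover have "card (P ` {0..n}) \<le> card (UNIV::'a set)" by (rule card_mono) auto
    ultimately show False using assms(2) unfolding n_def by simp
  qed
  then obtain i j where ij: "i \<le> n" "j \<le> n" "i < j" "P i = P j"
  proof -
    obtain i j where i_j: "i \<in> {0..n}" "j \<in> {0..n}" "P i = P j" and "i \<noteq> j"
      using \<open>\<not> inj_on P {0..n}\<close> unfolding inj_on_def by blast
    show ?thesis
    proof (cases "i < j")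
      case True thus ?thesis using that[of i j] i_j by auto
    next
      case False hence "j < i" using \<open>i \<noteq> j\<close> by simp
      thus ?thesis using that[of j i] i_j by auto
    qed
  qed
  define u where "u = prod_list (take (j - i) (drop i ws))"
  have tk: "take j ws = take i ws @ take (j - i) (drop i ws)"
    using take_add[of i "j-i" ws] ij by simp
  have Pj: "P j = P i * u" unfolding P_def u_def tk by simp
  have "take (j - i) (drop i ws) \<noteq> []" using ij unfolding n_def by auto
  moreover have "set (take (j - i) (drop i ws)) \<subseteq> MM"
    using assms(1) by (auto dest!: in_set_takeD in_set_dropD)
  ultimately have uM: "u \<in> MM" unfolding u_def
    by (cases "take (j - i) (drop i ws)") (auto intro: M_multr)
  have "P i * (1 - u) = 0" using Pj ij by (simp add: algebra_simps)
  moreover have "(1 - u) dvd 1" using one_minus_M[OF uM] unfolding M_unit by blast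
  ultimately have "P i = 0"
  proof -
    assume a: "P i * (1 - u) = 0" "(1 - u) dvd 1"
    then obtain v where "1 = (1 - u) * v" by (auto elim: dvdE)
    hence "P i = P i * (1 - u) * v" by (simp add: mult.assoc)
    thus ?thesis using a by simp
  qed
  moreover have "prod_list ws = P i * prod_list (drop i ws)"
  proof -
    have "prod_list ws = prod_list (take i ws @ drop i ws)" by simp
    also have "\<dots> = P i * prod_list (drop i ws)" unfolding P_def by (rule prod_list.append)
    finally show ?thesis .
  qed
  ultimately show ?thesis by simp
qed

end


context
  assumes loc: "local_ring TYPE('a::{comm_ring_1,finite})"
begin

lemma p_in_M:
  assumes "CHAR('a) = p ^ N"
  shows "(of_nat p :: 'a) \<in> MM"
proof (rule ccontr)
  assume "(of_nat p :: 'a) \<notin> MM"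
  hence "(of_nat p :: 'a) dvd 1" using M_unit[OF loc] by auto
  hence "(of_nat p :: 'a) ^ N dvd 1" using dvd_power_same[of _ 1 N] by force
  hence "(of_nat (p ^ N) :: 'a) dvd 1" by simp
  hence "(0::'a) dvd 1" using assms of_nat_CHAR[where 'a='a] by simp
  thus False using zero_ne_one'[OF loc] by simp
qed

lemma unit_order:
  assumes "(x::'a) dvd 1"
  shows "x ^ fact (card (UNIV::'a set)) = 1"
proof -
  define c where "c = card (UNIV::'a set)"
  have "\<not> inj_on (\<lambda>i. x ^ i) {0..c}"
  proof
    assume "inj_on (\<lambda>i. x ^ i) {0..c}"
    hence "card ((\<lambda>i. x ^ i) ` {0..c}) = card {0..c}" by (rule card_image)
    moreover have "card ((\<lambda>i. x ^ i) ` {0..c}) \<le> c" unfolding c_def by (rule card_mono) auto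
    ultimately show False by simp
  qed
  then obtain i j where ij: "i \<in> {0..c}" "j \<in> {0..c}" "x ^ i = x ^ j" "i \<noteq> j"
    unfolding inj_on_def by blast
  obtain i j where ij: "i \<le> c" "j \<le> c" "x ^ i = x ^ j" "i < j"
  proof (cases "i < j")
    case True thus ?thesis using that[of i j] ij by auto
  next
    case False hence "j < i" using ij by simp
    thus ?thesis using that[of j i] ij by auto
  qed
  have xi: "x ^ i dvd 1" using assms dvd_power_same[of x 1 i] by simp
  have "x ^ i * x ^ (j - i) = x ^ (i + (j - i))" by (simp add: power_add)
  also have "i + (j - i) = j" using ij by simp
  finally have "x ^ i * x ^ (j - i) = x ^ i * 1" using ij by simp
  hence xn: "x ^ (j - i) = 1"
  proof -
    assume h: "x ^ i * x ^ (j - i) = x ^ i * 1"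
    obtain v where v: "1 = x ^ i * v" using xi by (auto elim: dvdE)
    have "x ^ (j - i) = (x ^ i * v) * x ^ (j - i)" using v by simp
    also have "\<dots> = v * (x ^ i * x ^ (j - i))" by (simp add: algebra_simps)
    also have "\<dots> = 1" using h v by (simp add: algebra_simps)
    finally show ?thesis .
  qed
  have "j - i dvd fact c" using ij by (intro dvd_fact) auto
  then obtain k where "fact c = (j - i) * k" by (auto elim: dvdE)
  thus ?thesis using xn unfolding c_def[symmetric] by (simp add: power_mult)
qed

lemma pfree: "prime (p::nat) \<Longrightarrow> n > 0 \<Longrightarrow> \<exists>a s. n = a * p ^ s \<and> \<not> p dvd a"
proof (induction n rule: less_induct)
  case (less n)
  show ?case
  proof (cases "p dvd n")
    case True
    then obtain m where m: "n = p * m" by (auto elim: dvdE)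
    have "p > 1" using less.prems prime_gt_1_nat by auto
    hence "m < n" "m > 0" using m less.prems by auto
    then obtain a s where "m = a * p ^ s" "\<not> p dvd a" using less by blast
    thus ?thesis using m by (intro exI[of _ a] exI[of _ "Suc s"]) auto
  next
    case False thus ?thesis by (intro exI[of _ n] exI[of _ 0]) auto
  qed
qed

end

lemma diff_add_diff_cancel_ring: "((a::'a::ab_group_add) - b) + (b - c) = a - c" by simp


context
  assumes loc: "local_ring TYPE('a::{comm_ring_1,finite})"
begin

lemma neg_pow_p:
  assumes p: "prime p" and pM: "(of_nat p :: 'a) \<in> MM"
  shows "(- (y::'a)) ^ p + y ^ p \<in> MM"
proof (cases "odd p")
  case True thus ?thesis using M_0[OF loc] by simp
next
  case False
  hence "2 dvd p" by simp
  hence "p = 2" using p unfolding prime_nat_iff by auto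
  hence "(- y) ^ p + y ^ p = of_nat p * y ^ 2" by simp
  thus ?thesis using M_multr[OF loc pM] by simp
qed

lemma fresh:
  assumes p: "prime p" and pM: "(of_nat p :: 'a) \<in> MM"
  shows "(x - y) ^ p - (x ^ p - y ^ p) \<in> (MM::'a set)"
proof -
  define f where "f k = of_nat (p choose k) * x ^ k * (- y) ^ (p - k)" for k
  have p0: "p \<noteq> 0" "0 < p" using p prime_gt_0_nat by auto
  have "(x - y) ^ p = (x + (- y)) ^ p" by simp
  also have "\<dots> = (\<Sum>k\<le>p. f k)" unfolding f_def by (rule binomial_ring)
  also have "{..p} = insert p (insert 0 {1..<p})" using p0 by auto
  also have "(\<Sum>k\<in>insert p (insert 0 {1..<p}). f k) = f p + (f 0 + (\<Sum>k\<in>{1..<p}. f k))"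
    using p0 by (simp add: sum.insert)
  finally have e: "(x - y) ^ p = x ^ p + ((- y) ^ p + (\<Sum>k\<in>{1..<p}. f k))"
    unfolding f_def by simp
  have mid: "(\<Sum>k\<in>{1..<p}. f k) \<in> MM"
  proof (rule M_sum[OF loc])
    fix k assume k: "k \<in> {1..<p}"
    have "p dvd (p choose k)" using k p by (intro dvd_choose_prime) auto
    then obtain d where "p choose k = p * d" by (auto elim: dvdE)
    hence "f k = of_nat p * (of_nat d * x ^ k * (- y) ^ (p - k))" unfolding f_def by (simp add: algebra_simps)
    thus "f k \<in> MM" using M_multr[OF loc pM] by simp
  qed simp
  have eq: "(x - y) ^ p - (x ^ p - y ^ p) = (\<Sum>k\<in>{1..<p}. f k) + ((- y) ^ p + y ^ p)"
    using e by (simp add: algebra_simps)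
  show ?thesis unfolding eq by (rule M_add[OF loc mid neg_pow_p[OF p pM]])
qed

lemma fresh_iter:
  assumes p: "prime p" and pM: "(of_nat p :: 'a) \<in> MM"
  shows "(x - y) ^ (p ^ s) - (x ^ (p ^ s) - y ^ (p ^ s)) \<in> (MM::'a set)"
proof (induction s)
  case 0 thus ?case using M_0[OF loc] by simp
next
  case (Suc s)
  define A where "A = (x - y) ^ (p ^ s)"
  define B where "B = x ^ (p ^ s) - y ^ (p ^ s)"
  have "A ^ p - B ^ p \<in> MM" using cong_power[OF loc Suc[folded A_def B_def]] .
  moreover have "B ^ p - ((x ^ (p ^ s)) ^ p - (y ^ (p ^ s)) ^ p) \<in> MM"
    unfolding B_def by (rule fresh[OF p pM])
  ultimately have "(A ^ p - B ^ p) + (B ^ p - ((x ^ (p ^ s)) ^ p - (y ^ (p ^ s)) ^ p)) \<in> MM"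
    by (rule M_add[OF loc])
  moreover have "(A ^ p - B ^ p) + (B ^ p - ((x ^ (p ^ s)) ^ p - (y ^ (p ^ s)) ^ p))
     = A ^ p - ((x ^ (p ^ s)) ^ p - (y ^ (p ^ s)) ^ p)" by (rule diff_add_diff_cancel_ring)
  ultimately have "A ^ p - ((x ^ (p ^ s)) ^ p - (y ^ (p ^ s)) ^ p) \<in> MM" by metis
  thus ?case unfolding A_def by (simp add: power_mult[symmetric] mult.commute)
qed

lemma lift_step:
  assumes pM: "(of_nat p :: 'a) \<in> MM" and p: "prime p" and xy: "x - y \<in> (MM::'a set)"
  shows "\<exists>w\<in>MM. x ^ p - y ^ p = (x - y) * w"
proof -
  define w where "w = (\<Sum>i<p. y ^ (p - Suc i) * x ^ i)"
  have e: "x ^ p - y ^ p = (x - y) * w" unfolding w_def by (rule power_diff_sumr2)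
  have "w - (\<Sum>i<p. x ^ (p - Suc i) * x ^ i) = (\<Sum>i<p. y ^ (p - Suc i) * x ^ i - x ^ (p - Suc i) * x ^ i)"
    unfolding w_def by (simp add: sum_subtractf)
  also have "\<dots> \<in> MM"
  proof (rule M_sum[OF loc])
    fix i
    have "y - x \<in> MM" using M_uminus[OF loc xy] by simp
    hence "y ^ (p - Suc i) - x ^ (p - Suc i) \<in> MM" by (rule cong_power[OF loc])
    hence "(y ^ (p - Suc i) - x ^ (p - Suc i)) * x ^ i \<in> MM" by (rule M_multr[OF loc])
    thus "y ^ (p - Suc i) * x ^ i - x ^ (p - Suc i) * x ^ i \<in> MM" by (simp add: algebra_simps)
  qed simp
  finally have d: "w - (\<Sum>i<p. x ^ (p - Suc i) * x ^ i) \<in> MM" .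
  have "(\<Sum>i<p. x ^ (p - Suc i) * x ^ i) = (\<Sum>i<p. x ^ (p - 1))"
    by (intro sum.cong refl) (simp add: power_add[symmetric])
  also have "\<dots> = of_nat p * x ^ (p - 1)" by simp
  finally have "(\<Sum>i<p. x ^ (p - Suc i) * x ^ i) \<in> MM" using M_multr[OF loc pM] by simp
  hence "w \<in> MM" using M_add[OF loc d] by fastforce
  thus ?thesis using e by blast
qed

lemma lift:
  assumes pM: "(of_nat p :: 'a) \<in> MM" and p: "prime p" and xy: "x - y \<in> (MM::'a set)"
  shows "\<exists>ws. length ws = L \<and> set ws \<subseteq> MM \<and> x ^ (p ^ L) - y ^ (p ^ L) = (x - y) * prod_list ws"
proof (induction L)
  case 0 thus ?case by simp
next
  case (Suc L)
  then obtain ws where ws: "length ws = L" "set ws \<subseteq> MM" "x ^ (p ^ L) - y ^ (p ^ L) = (x - y) * prod_list ws"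
    by blast
  have "x ^ (p ^ L) - y ^ (p ^ L) \<in> MM" using ws(3) M_multr[OF loc xy] by simp
  then obtain w where w: "w \<in> MM" "(x ^ (p ^ L)) ^ p - (y ^ (p ^ L)) ^ p = (x ^ (p ^ L) - y ^ (p ^ L)) * w"
    using lift_step[OF pM p] by blast
  show ?case
  proof (intro exI[of _ "ws @ [w]"] conjI)
    show "length (ws @ [w]) = Suc L" "set (ws @ [w]) \<subseteq> MM" using ws w by auto
    have "x ^ (p ^ Suc L) - y ^ (p ^ Suc L) = (x ^ (p ^ L)) ^ p - (y ^ (p ^ L)) ^ p"
      by (simp add: power_mult[symmetric] mult.commute)
    also have "\<dots> = (x - y) * prod_list (ws @ [w])" using w ws by (simp add: algebra_simps)
    finally show "x ^ (p ^ Suc L) - y ^ (p ^ Suc L) = (x - y) * prod_list (ws @ [w])" .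
  qed
qed

lemma lift_eq:
  assumes pM: "(of_nat p :: 'a) \<in> MM" and p: "prime p" and xy: "x - y \<in> (MM::'a set)"
  shows "x ^ (p ^ card (UNIV::'a set)) = y ^ (p ^ card (UNIV::'a set))"
proof -
  obtain ws where ws: "length ws = card (UNIV::'a set)" "set ws \<subseteq> MM"
    "x ^ (p ^ card (UNIV::'a set)) - y ^ (p ^ card (UNIV::'a set)) = (x - y) * prod_list ws"
    using lift[OF pM p xy] by blast
  have "prod_list ((x - y) # ws) = 0" using ws xy by (intro nil_prod[OF loc]) auto
  thus ?thesis using ws(3) by simp
qed

end


definition TP :: "'a::comm_ring_1 set \<Rightarrow> bool" where
  "TP T \<longleftrightarrow> (\<forall>t\<in>T. t dvd 1) \<and> 1 \<in> T \<and> (\<forall>x\<in>T. \<forall>y\<in>T. x * y \<in> T) \<and>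
      (\<forall>x\<in>T. \<exists>y\<in>T. x * y = 1) \<and>
      (\<forall>x\<in>T. \<forall>y\<in>T. x - y \<in> max_ideal \<longrightarrow> x = y) \<and>
      (\<forall>u. u \<notin> max_ideal \<longrightarrow> (\<exists>t\<in>T. u - t \<in> max_ideal))"

lemma teich_THE: "teichmuller = (THE T. TP T)"
  unfolding teichmuller_def TP_def ..

context
  fixes p N :: nat
  assumes loc: "local_ring TYPE('a::{comm_ring_1,finite})"
    and p: "prime p" and ch: "CHAR('a) = p ^ N"
begin

lemma pM: "(of_nat p :: 'a) \<in> MM" using p_in_M[OF loc ch] .

lemma exE: "\<exists>E::nat. E > 0 \<and> (\<forall>x::'a. x \<notin> MM \<longrightarrow> x ^ E - x \<in> MM)
    \<and> (\<forall>x y::'a. x - y \<in> MM \<longrightarrow> x ^ E = y ^ E)"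
proof -
  define c where "c = card (UNIV::'a set)"
  obtain a s where as: "fact c = a * p ^ s" "\<not> p dvd a"
    using pfree[OF loc p, of "fact c"] by auto
  have a0: "a > 0" using as by (metis gr0I mult_zero_left fact_nonzero)
  have ua: "x ^ a - 1 \<in> MM" if xu: "x \<notin> MM" for x :: 'a
  proof -
    have "x dvd 1" using xu M_unit[OF loc] by auto
    hence "x ^ fact c = 1" unfolding c_def by (rule unit_order[OF loc])
    hence y1: "(x ^ a) ^ (p ^ s) = 1" using as by (simp add: power_mult)
    have "(x ^ a - 1) ^ (p ^ s) - ((x ^ a) ^ (p ^ s) - 1 ^ (p ^ s)) \<in> MM"
      by (rule fresh_iter[OF loc p pM])
    hence "(x ^ a - 1) ^ (p ^ s) \<in> MM" using y1 by simp
    thus ?thesis using power_notin_M[OF loc] by blast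
  qed
  define E where "E = (p ^ c) ^ totient a"
  have cop: "coprime (p ^ c) a" using prime_imp_coprime[OF p as(2)] by simp
  have "[E = 1] (mod a)" unfolding E_def by (rule euler_theorem[OF cop])
  hence adv: "a dvd E - 1" by (rule cong_to_1_nat)
  have pp: "p > 0" using p prime_gt_0_nat by auto
  have E0: "E > 0" unfolding E_def using pp by simp
  have tot: "totient a > 0" using a0 by simp
  have pdv: "p ^ c dvd E" unfolding E_def using tot by (simp add: dvd_power)
  show ?thesis
  proof (intro exI[of _ E] conjI allI impI E0)
    fix x :: 'a assume xu: "x \<notin> MM"
    obtain k where k: "E - 1 = a * k" using adv by (auto elim: dvdE)
    have "x ^ E = x * x ^ (E - 1)" using E0 by (metis Suc_diff_1 power_Suc)
    also have "\<dots> = x * (x ^ a) ^ k" using k by (simp add: power_mult)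
    finally have xe: "x ^ E = x * (x ^ a) ^ k" .
    have "(x ^ a) ^ k - 1 ^ k \<in> MM" by (rule cong_power[OF loc ua[OF xu]])
    hence "x * ((x ^ a) ^ k - 1) \<in> MM" by (simp add: M_multl[OF loc])
    thus "x ^ E - x \<in> MM" using xe by (simp add: algebra_simps)
  next
    fix x y :: 'a assume "x - y \<in> MM"
    hence e: "x ^ (p ^ c) = y ^ (p ^ c)" unfolding c_def by (rule lift_eq[OF loc pM p])
    obtain j where "E = p ^ c * j" using pdv by (auto elim: dvdE)
    thus "x ^ E = y ^ E" using e by (simp add: power_mult)
  qed
qed

lemma TP_unique: "\<exists>!T::'a set. TP T"
proof -
  obtain E :: nat where E0: "E > 0" and e1: "\<And>x::'a. x \<notin> MM \<Longrightarrow> x ^ E - x \<in> MM"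
    and e2: "\<And>x y::'a. x - y \<in> MM \<Longrightarrow> x ^ E = y ^ E" using exE by blast
  have cg: "x - y \<in> MM" if "x \<notin> MM" "y \<notin> MM" "x ^ E - y ^ E \<in> MM" for x y :: 'a
  proof -
    have "(x - x ^ E) + (x ^ E - y ^ E) + (y ^ E - y) \<in> MM"
      using e1[OF that(1)] e1[OF that(2)] that(3) M_uminus[OF loc] M_add[OF loc]
      by (metis minus_diff_eq)
    thus ?thesis by simp
  qed
  show ?thesis
  proof (rule ex_ex1I)
    define T0 where "T0 = (\<lambda>x. x ^ E) ` {x::'a. x \<notin> MM}"
    show "\<exists>T::'a set. TP T"
    proof (intro exI[of _ T0])
      show "TP T0" unfolding TP_def
      proof (intro conjI ballI allI impI)
        fix t assume "t \<in> T0"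
        then obtain x where x: "x \<notin> MM" "t = x ^ E" unfolding T0_def by auto
        have "x dvd 1" using x M_unit[OF loc] by auto
        thus "t dvd 1" using x dvd_power_same[of x 1 E] by simp
      next
        show "1 \<in> T0" unfolding T0_def using one_notin_M[OF loc] by (auto intro!: image_eqI[of _ _ 1])
      next
        fix t t' assume "t \<in> T0" "t' \<in> T0"
        then obtain x y where x: "x \<notin> MM" "t = x ^ E" "y \<notin> MM" "t' = y ^ E" unfolding T0_def by auto
        have "x * y \<notin> MM" using x mult_notin_M[OF loc] by auto
        thus "t * t' \<in> T0" unfolding T0_def using x by (auto intro!: image_eqI[of _ _ "x * y"] simp: power_mult_distrib)
      next
        fix t assume "t \<in> T0"
        then obtain x where x: "x \<notin> MM" "t = x ^ E" unfolding T0_def by auto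
        have "x dvd 1" using x M_unit[OF loc] by auto
        then obtain v where v: "1 = x * v" by (auto elim: dvdE)
        hence "v dvd 1" by (metis dvdI mult.commute)
        hence "v \<notin> MM" using M_unit[OF loc] by auto
        moreover have "t * v ^ E = 1" using x v by (metis power_mult_distrib power_one)
        ultimately show "\<exists>y\<in>T0. t * y = 1" unfolding T0_def by auto
      next
        fix t t' assume "t \<in> T0" "t' \<in> T0" "t - t' \<in> MM"
        then obtain x y where x: "x \<notin> MM" "t = x ^ E" "y \<notin> MM" "t' = y ^ E" "x ^ E - y ^ E \<in> MM"
          unfolding T0_def by auto
        show "t = t'" using e2[OF cg[OF x(1) x(3) x(5)]] x by simp
      next
        fix u :: 'a assume "u \<notin> MM"
        moreover have "u - u ^ E \<in> MM" using M_uminus[OF loc e1[OF \<open>u \<notin> MM\<close>]] by simp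
        ultimately show "\<exists>t\<in>T0. u - t \<in> MM" unfolding T0_def by auto
      qed
    qed
  next
    have fix1: "t ^ E = t" if "TP T" "t \<in> T" for T :: "'a set" and t
    proof -
      have pw: "t ^ n \<in> T" for n using that unfolding TP_def by (induction n) auto
      have "t dvd 1" using that unfolding TP_def by auto
      hence "t \<notin> MM" using M_unit[OF loc] by auto
      hence "t ^ E - t \<in> MM" by (rule e1)
      thus ?thesis using that pw[of E] unfolding TP_def by blast
    qed
    have sub: "T \<subseteq> T'" if h: "TP T" "TP T'" for T T' :: "'a set"
    proof
      fix t assume t: "t \<in> T"
      have "t dvd 1" using h t unfolding TP_def by auto
      hence "t \<notin> MM" using M_unit[OF loc] by auto
      then obtain t' where t': "t' \<in> T'" "t - t' \<in> MM" using h(2) unfolding TP_def by blast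
      have "t = t ^ E" using fix1[OF h(1) t] by simp
      also have "\<dots> = t' ^ E" using e2[OF t'(2)] .
      also have "\<dots> = t'" using fix1[OF h(2) t'(1)] .
      finally show "t \<in> T'" using t'(1) by simp
    qed
    fix T T' :: "'a set" assume "TP T" "TP T'"
    thus "T = T'" using sub by blast
  qed
qed

lemma TP_teich: "TP (teichmuller::'a set)"
  unfolding teich_THE by (rule theI'[OF TP_unique])

end


lemma sub_0: "is_subring S \<Longrightarrow> 0 \<in> S" unfolding is_subring_def by (metis diff_self)
lemma sub_diff: "is_subring S \<Longrightarrow> x \<in> S \<Longrightarrow> y \<in> S \<Longrightarrow> x - y \<in> S" unfolding is_subring_def by auto
lemma sub_mult: "is_subring S \<Longrightarrow> x \<in> S \<Longrightarrow> y \<in> S \<Longrightarrow> x * y \<in> S" unfolding is_subring_def by auto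
lemma sub_1: "is_subring S \<Longrightarrow> 1 \<in> S" unfolding is_subring_def by auto
lemma sub_uminus: "is_subring S \<Longrightarrow> x \<in> S \<Longrightarrow> - x \<in> S" using sub_diff[of S 0 x] sub_0[of S] by simp
lemma sub_add: "is_subring S \<Longrightarrow> x \<in> S \<Longrightarrow> y \<in> S \<Longrightarrow> x + y \<in> S"
  using sub_diff[of S x "- y"] sub_uminus[of S y] by simp
lemma sub_power: "is_subring S \<Longrightarrow> x \<in> S \<Longrightarrow> x ^ n \<in> S"
  by (induction n) (auto intro: sub_1 sub_mult)
lemma sub_of_nat: "is_subring S \<Longrightarrow> of_nat n \<in> S"
  by (induction n) (auto intro: sub_0 sub_1 sub_add)

context
  fixes p N :: nat
  assumes loc: "local_ring TYPE('a::{comm_ring_1,finite})"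
    and p: "prime p" and ch: "CHAR('a) = p ^ N"
begin

abbreviation AA :: "'a set" where "AA \<equiv> insert 0 teichmuller"

lemma teich_unit: "t \<in> (teichmuller::'a set) \<Longrightarrow> t \<notin> MM"
  using TP_teich[OF loc p ch] M_unit[OF loc] unfolding TP_def by auto

lemma K2: "t \<in> AA \<Longrightarrow> t' \<in> AA \<Longrightarrow> t \<noteq> t' \<Longrightarrow> t - t' \<notin> MM"
proof -
  assume a: "t \<in> AA" "t' \<in> AA" "t \<noteq> t'"
  have inj: "\<forall>x\<in>(teichmuller::'a set). \<forall>y\<in>teichmuller. x - y \<in> MM \<longrightarrow> x = y"
    using TP_teich[OF loc p ch] unfolding TP_def by blast
  show "t - t' \<notin> MM"
  proof (cases "t = 0")
    case True
    hence "t' \<in> teichmuller" using a by auto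
    hence "t' \<notin> MM" by (rule teich_unit)
    thus ?thesis using True M_uminus[OF loc, of "- t'"] by auto
  next
    case False
    hence tT: "t \<in> teichmuller" using a by auto
    show ?thesis
    proof (cases "t' = 0")
      case True thus ?thesis using teich_unit[OF tT] by simp
    next
      case False
      hence "t' \<in> teichmuller" using a by auto
      thus ?thesis using inj tT a(3) by blast
    qed
  qed
qed

lemma K3: "\<exists>t\<in>AA. g - t \<in> MM"
proof (cases "g \<in> MM")
  case True thus ?thesis by auto
next
  case False
  thus ?thesis using TP_teich[OF loc p ch] unfolding TP_def by blast
qed

lemma card_UNIV_eq: "card (UNIV::'a set) = card (AA::'a set) * card (MM::'a set)"
proof -
  have "bij_betw (\<lambda>(t, z). t + z) ((AA::'a set) \<times> (MM::'a set)) UNIV"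
  proof (rule bij_betw_imageI)
    show "inj_on (\<lambda>(t, z). t + z) (AA \<times> MM)"
    proof (rule inj_onI, clarify)
      fix t z t' z' assume h: "t \<in> AA" "z \<in> MM" "t' \<in> AA" "z' \<in> MM" "t + z = t' + z'"
      have "t - t' = z' - z" using h(5) by (simp add: algebra_simps)
      hence "t - t' \<in> MM" using M_diff[OF loc h(4) h(2)] by simp
      hence "t = t'" using K2 h by blast
      thus "t = t' \<and> z = z'" using h(5) by simp
    qed
    show "(\<lambda>(t, z). t + z) ` (AA \<times> MM) = UNIV"
    proof -
      have "g \<in> (\<lambda>(t, z). t + z) ` (AA \<times> MM)" for g :: 'a
      proof -
        obtain t where "t \<in> AA" "g - t \<in> MM" using K3 by blast
        thus ?thesis by (auto intro!: image_eqI[of _ _ "(t, g - t)"])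
      qed
      thus ?thesis by blast
    qed
  qed
  hence "card ((AA::'a set) \<times> (MM::'a set)) = card (UNIV::'a set)" by (rule bij_betw_same_card)
  thus ?thesis by (simp add: card_cartesian_product)
qed

lemma card_AA_ge2: "card (AA::'a set) \<ge> 2"
proof -
  have "1 \<in> (teichmuller::'a set)" using TP_teich[OF loc p ch] unfolding TP_def by blast
  hence "{0, 1} \<subseteq> AA" by auto
  hence "card {0::'a, 1} \<le> card AA" by (intro card_mono) auto
  thus ?thesis using zero_ne_one'[OF loc] by simp
qed

lemma q_eq: "card (UNIV::'a set) div card (MM::'a set) = card (AA::'a set)"
proof -
  have "(MM::'a set) \<noteq> {}" using M_0[OF loc] by blast
  hence "card (MM::'a set) > 0" by (simp add: card_gt_0_iff)
  thus ?thesis using card_UNIV_eq by simp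
qed

lemma inv_sub:
  assumes S: "is_subring S" and u: "u \<in> S" "(u::'a) dvd 1"
  shows "\<exists>v\<in>S. u * v = 1"
proof -
  define c where "c = card (UNIV::'a set)"
  have e: "u ^ fact c = 1" unfolding c_def by (rule unit_order[OF loc u(2)])
  have "fact c = Suc (fact c - 1)" using fact_ge_1[of c, where 'a=nat] by simp
  hence "u * u ^ (fact c - 1) = u ^ fact c" by (metis power_Suc)
  hence "u * u ^ (fact c - 1) = 1" using e by simp
  thus ?thesis using sub_power[OF S u(1)] by blast
qed

lemma AA_sub: "is_subring S \<Longrightarrow> teichmuller \<subseteq> S \<Longrightarrow> AA \<subseteq> S" using sub_0 by auto

lemma inj_lower:
  assumes W: "is_subring W" and TW: "teichmuller \<subseteq> W" and y: "(y::'a) \<notin> W"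
    and V: "\<And>w t. w \<in> W \<Longrightarrow> t \<in> AA \<Longrightarrow> w + t * y \<in> V"
  shows "card W * card AA \<le> card V"
proof -
  have AW: "AA \<subseteq> W" using AA_sub[OF W TW] .
  have "inj_on (\<lambda>(w, t). w + t * y) (W \<times> AA)"
  proof (rule inj_onI, clarify)
    fix w t w' t' assume h: "w \<in> W" "t \<in> AA" "w' \<in> W" "t' \<in> AA" "w + t * y = w' + t' * y"
    show "w = w' \<and> t = t'"
    proof (cases "t = t'")
      case True thus ?thesis using h(5) by simp
    next
      case False
      hence nm: "t - t' \<notin> MM" using K2 h by blast
      hence "(t - t') dvd 1" using M_unit[OF loc] by auto
      moreover have tt: "t - t' \<in> W" using AW h by (intro sub_diff[OF W]) auto
      ultimately obtain v where v: "v \<in> W" "(t - t') * v = 1" using inv_sub[OF W] by blast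
      have "(t - t') * y = w' - w" using h(5) by (simp add: algebra_simps)
      hence "(t - t') * y \<in> W" using sub_diff[OF W h(3) h(1)] by simp
      hence "v * ((t - t') * y) \<in> W" using v sub_mult[OF W] by blast
      moreover have "v * ((t - t') * y) = ((t - t') * v) * y" by (simp add: algebra_simps)
      hence "v * ((t - t') * y) = y" using v(2) by simp
      ultimately show ?thesis using y by simp
    qed
  qed
  hence "card ((\<lambda>(w, t). w + t * y) ` (W \<times> AA)) = card (W \<times> AA)" by (rule card_image)
  moreover have "card ((\<lambda>(w, t). w + t * y) ` (W \<times> AA)) \<le> card V"
    using V by (intro card_mono) auto
  ultimately show ?thesis by (simp add: card_cartesian_product)
qed

end


context
  fixes p N :: nat
  assumes loc: "local_ring TYPE('a::{comm_ring_1,finite})"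
    and p: "prime p" and ch: "CHAR('a) = p ^ N"
begin

lemma good_x:
  assumes ms: "maximal_subring S (T::'a set)" and TS: "teichmuller \<subseteq> S"
  shows "\<exists>x\<in>T \<inter> MM. x \<notin> S \<and> (\<forall>j\<in>T \<inter> MM. x * j \<in> S)"
proof -
  have S: "is_subring S" and T: "is_subring T" and ST: "S \<subset> T"
    using ms unfolding maximal_subring_def by auto
  have AS: "AA \<subseteq> S" using AA_sub[OF loc p ch S TS] .
  obtain x0 where x0: "x0 \<in> T \<inter> MM" "x0 \<notin> S"
  proof (rule ccontr)
    assume "\<not> thesis"
    hence h: "T \<inter> MM \<subseteq> S" using that by blast
    have "T \<subseteq> S"
    proof
      fix g assume g: "g \<in> T"
      obtain t where t: "t \<in> AA" "g - t \<in> MM" using K3[OF loc p ch] by blast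
      have "t \<in> S" using t AS by auto
      hence "g - t \<in> T" using g ST sub_diff[OF T] by blast
      hence "g - t \<in> S" using t h by auto
      hence "(g - t) + t \<in> S" using \<open>t \<in> S\<close> sub_add[OF S] by blast
      thus "g \<in> S" by simp
    qed
    thus False using ST by auto
  qed
  show ?thesis
  proof (rule ccontr)
    assume "\<not> ?thesis"
    hence bad: "\<And>x. x \<in> T \<inter> MM \<Longrightarrow> x \<notin> S \<Longrightarrow> \<exists>j\<in>T \<inter> MM. x * j \<notin> S" by blast
    have "\<exists>ws. length ws = n \<and> set ws \<subseteq> T \<inter> MM \<and> x0 * prod_list ws \<in> T \<inter> MM \<and> x0 * prod_list ws \<notin> S" for n
    proof (induction n)
      case 0 thus ?case using x0 by simp
    next
      case (Suc n)
      then obtain ws where ws: "length ws = n" "set ws \<subseteq> T \<inter> MM" "x0 * prod_list ws \<in> T \<inter> MM"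
        "x0 * prod_list ws \<notin> S" by blast
      obtain j where j: "j \<in> T \<inter> MM" "x0 * prod_list ws * j \<notin> S" using bad[OF ws(3) ws(4)] by blast
      have "x0 * prod_list ws * j \<in> T" using ws(3) j(1) sub_mult[OF T] by blast
      moreover have "x0 * prod_list ws * j \<in> MM" using j(1) M_multl[OF loc] by blast
      ultimately show ?case using ws j
        by (intro exI[of _ "ws @ [j]"]) (auto simp: mult.assoc)
    qed
    then obtain ws where ws: "length ws = card (UNIV::'a set)" "set ws \<subseteq> T \<inter> MM"
      "x0 * prod_list ws \<notin> S" by blast
    have "prod_list (x0 # ws) = 0" using ws x0 by (intro nil_prod[OF loc]) auto
    hence "x0 * prod_list ws = 0" by simp
    thus False using ws(3) sub_0[OF S] by simp
  qed
qed

lemma maximal_props: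
  assumes ms: "maximal_subring S (T::'a set)" and TS: "teichmuller \<subseteq> S"
  shows "card T = card S * card (AA::'a set) \<and> (\<forall>y\<in>T. of_nat p * y \<in> S)"
proof -
  have S: "is_subring S" and T: "is_subring T" and ST: "S \<subset> T"
    and mx: "\<And>U. is_subring U \<Longrightarrow> S \<subseteq> U \<Longrightarrow> U \<subseteq> T \<Longrightarrow> U = S \<or> U = T"
    using ms unfolding maximal_subring_def by auto
  have AS: "AA \<subseteq> S" using AA_sub[OF loc p ch S TS] .
  obtain x where x: "x \<in> T" "x \<in> MM" "x \<notin> S" and xj: "\<And>j. j \<in> T \<Longrightarrow> j \<in> MM \<Longrightarrow> x * j \<in> S"
    using good_x[OF ms TS] by blast
  define U where "U = {s + g * x | s g. s \<in> S \<and> g \<in> T}"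
  have SU: "S \<subseteq> U" unfolding U_def by (force intro: sub_0[OF T])
  have UT: "U \<subseteq> T" unfolding U_def using ST x(1) sub_add[OF T] sub_mult[OF T] by blast
  have xU: "x \<in> U" unfolding U_def using sub_0[OF S] sub_1[OF T] by force
  have subU: "is_subring U" unfolding is_subring_def
  proof (intro conjI ballI)
    show "1 \<in> U" using SU sub_1[OF S] by blast
  next
    fix a b assume a: "a \<in> U" and b: "b \<in> U"
    then obtain s g s' g' where h: "s \<in> S" "g \<in> T" "s' \<in> S" "g' \<in> T" "a = s + g * x" "b = s' + g' * x"
      unfolding U_def by blast
    have sT: "s \<in> T" "s' \<in> T" using h ST by auto
    have "a - b = (s - s') + (g - g') * x" using h by (simp add: algebra_simps)
    moreover have "s - s' \<in> S" "g - g' \<in> T" using h sub_diff[OF S] sub_diff[OF T] by auto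
    ultimately show "a - b \<in> U" unfolding U_def by blast
    have "a * b = s * s' + (s * g' + s' * g + g * g' * x) * x" using h by (simp add: algebra_simps)
    moreover have "s * s' \<in> S" using h sub_mult[OF S] by auto
    moreover have "s * g' + s' * g + g * g' * x \<in> T"
      using h sT x(1) sub_mult[OF T] sub_add[OF T] by meson
    ultimately show "a * b \<in> U" unfolding U_def by blast
  qed
  have UeqT: "U = T" using mx[OF subU SU UT] xU x(3) by blast
  have dec: "\<exists>s\<in>S. \<exists>g\<in>T. y = s + g * x" if "y \<in> T" for y
    using that UeqT unfolding U_def by blast
  have red: "\<exists>s\<in>S. \<exists>t\<in>AA. y = s + t * x" if yT: "y \<in> T" for y
  proof -
    obtain s g where sg: "s \<in> S" "g \<in> T" "y = s + g * x" using dec[OF yT] by blast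
    obtain t where t: "t \<in> AA" "g - t \<in> MM" using K3[OF loc p ch] by blast
    have "g - t \<in> T" using sg t AS ST sub_diff[OF T] by blast
    hence "x * (g - t) \<in> S" using xj t by blast
    hence "s + x * (g - t) \<in> S" using sg sub_add[OF S] by blast
    moreover have "y = (s + x * (g - t)) + t * x" using sg by (simp add: algebra_simps)
    ultimately show ?thesis using t by blast
  qed
  have "T \<subseteq> (\<lambda>(s, t). s + t * x) ` (S \<times> (AA::'a set))" using red by force
  hence "card T \<le> card ((\<lambda>(s, t). s + t * x) ` (S \<times> (AA::'a set)))" by (intro card_mono) auto
  also have "\<dots> \<le> card (S \<times> (AA::'a set))" by (rule card_image_le) simp
  finally have le1: "card T \<le> card S * card (AA::'a set)" by (simp add: card_cartesian_product)
  have le2: "card S * card (AA::'a set) \<le> card T"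
  proof (rule inj_lower[OF loc p ch S TS x(3)])
    fix w t assume "w \<in> S" "t \<in> (AA::'a set)"
    thus "w + t * x \<in> T" using ST AS x(1) sub_add[OF T] sub_mult[OF T] by blast
  qed
  have pT: "\<forall>y\<in>T. of_nat p * y \<in> S"
  proof
    fix y assume "y \<in> T"
    then obtain s g where sg: "s \<in> S" "g \<in> T" "y = s + g * x" using dec by blast
    have "of_nat p * g \<in> T" using sg sub_of_nat[OF T] sub_mult[OF T] by blast
    moreover have "of_nat p * g \<in> MM" using M_multr[OF loc pM[OF loc p ch]] by blast
    ultimately have "x * (of_nat p * g) \<in> S" using xj by blast
    moreover have "of_nat p * s \<in> S" using sg sub_of_nat[OF S] sub_mult[OF S] by blast
    ultimately have "of_nat p * s + x * (of_nat p * g) \<in> S" using sub_add[OF S] by blast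
    moreover have "of_nat p * y = of_nat p * s + x * (of_nat p * g)" using sg by (simp add: algebra_simps)
    ultimately show "of_nat p * y \<in> S" by simp
  qed
  show ?thesis using le1 le2 pT by simp
qed

lemma index_maximal:
  assumes S: "is_subring S" and T: "is_subring (T::'a set)" and ST: "S \<subseteq> T"
    and TS: "teichmuller \<subseteq> S" and idx: "card T div card S = card (AA::'a set)"
  shows "maximal_subring S T"
proof -
  have c2: "card (AA::'a set) \<ge> 2" by (rule card_AA_ge2[OF loc p ch])
  have cS: "card S > 0" using sub_1[OF S] by (auto simp: card_gt_0_iff)
  have "S \<noteq> T"
  proof
    assume "S = T"
    have "card T > 0" using cS unfolding \<open>S = T\<close> .
    hence "card T \<noteq> 0" by (rule gr_implies_not_zero)
    hence "card T div card T = 1" by (rule div_self)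
    hence "card T div card S = 1" using \<open>S = T\<close> by simp
    thus False using idx c2 by simp
  qed
  moreover have "U = S \<or> U = T" if U: "is_subring U" "S \<subseteq> U" "U \<subseteq> T" for U
  proof (rule ccontr)
    assume "\<not> (U = S \<or> U = T)"
    then obtain x y where x: "x \<in> U" "x \<notin> S" and y: "y \<in> T" "y \<notin> U" using U by blast
    have TU: "teichmuller \<subseteq> U" using TS U by blast
    have AU: "AA \<subseteq> U" using AA_sub[OF loc p ch S TS] U by blast
    have "card S * card (AA::'a set) \<le> card U"
    proof (rule inj_lower[OF loc p ch S TS x(2)])
      fix w t assume w: "w \<in> S" and t: "t \<in> (AA::'a set)"
      have "w \<in> U" "t \<in> U" using w t U AU by auto
      hence "t * x \<in> U" using x(1) sub_mult[OF U(1)] by blast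
      thus "w + t * x \<in> U" using \<open>w \<in> U\<close> sub_add[OF U(1)] by blast
    qed
    moreover have "card U * card (AA::'a set) \<le> card T"
    proof (rule inj_lower[OF loc p ch U(1) TU y(2)])
      fix w t assume w: "w \<in> U" and t: "t \<in> (AA::'a set)"
      have "w \<in> T" "t \<in> T" using w t U AU by auto
      hence "t * y \<in> T" using y(1) sub_mult[OF T] by blast
      thus "w + t * y \<in> T" using \<open>w \<in> T\<close> sub_add[OF T] by blast
    qed
    ultimately have le: "card S * (card (AA::'a set) * card (AA::'a set)) \<le> card T"
    proof -
      assume a: "card S * card (AA::'a set) \<le> card U" and b: "card U * card (AA::'a set) \<le> card T"
      have h: "card S * card (AA::'a set) * card (AA::'a set) \<le> card U * card (AA::'a set)"
        using a by (rule mult_le_mono1)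
      have e: "card S * (card (AA::'a set) * card (AA::'a set)) = card S * card (AA::'a set) * card (AA::'a set)"
        by (rule mult.assoc[symmetric])
      show ?thesis unfolding e using order_trans[OF h b] .
    qed
    define c where "c = card (AA::'a set)"
    have "card T = card S * (card T div card S) + card T mod card S" by simp
    moreover have "card T mod card S < card S" using cS by simp
    ultimately have "card T < card S * (c + 1)" using idx unfolding c_def by simp
    hence "card S * (c * c) < card S * (c + 1)" using le unfolding c_def by simp
    hence "c * c < c + 1" by (rule mult_less_cancel1[THEN iffD1, THEN conjunct2])
    moreover have "2 * c \<le> c * c" using c2 unfolding c_def by (intro mult_le_mono1)
    ultimately show False using c2 unfolding c_def by linarith
  qed
  ultimately show ?thesis unfolding maximal_subring_def using S T ST by auto
qed

end


theorem proposition34: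
  fixes Rs :: "nat \<Rightarrow> 'a::{comm_ring_1, finite} set"
    and l p N q :: nat
  assumes "local_ring TYPE('a)"
    and "q = card (UNIV :: 'a set) div card (max_ideal :: 'a set)"
    and "prime p" and "CHAR('a) = p ^ N"
    and "Rs 0 = UNIV" and "Rs l = teich_subring"
    and "\<forall>i\<le>l. is_subring (Rs i)"
    and "\<forall>i\<in>{1..l}. Rs i \<subseteq> Rs (i - 1)"
  shows "((\<forall>i\<in>{1..l}. maximal_subring (Rs i) (Rs (i - 1)))
            \<longleftrightarrow> (\<forall>i\<in>{1..l}. add_index (Rs (i - 1)) (Rs i) = q))
       \<and> ((\<forall>i\<in>{1..l}. maximal_subring (Rs i) (Rs (i - 1)))
            \<longrightarrow> (\<forall>k\<le>l. \<forall>x. of_nat (p ^ k) * x \<in> Rs k))"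
proof -
  note loc = assms(1) and pp = assms(3) and ch = assms(4)
  have qA: "q = card (insert 0 teichmuller :: 'a set)" using assms(2) q_eq[OF loc pp ch] by simp
  have tl: "(teichmuller::'a set) \<subseteq> Rs l"
  proof
    fix t :: 'a assume "t \<in> teichmuller"
    hence "t = (\<Sum>s\<in>{t}. of_int ((\<lambda>_. 1) s) * s) \<and> finite {t} \<and> {t} \<subseteq> teichmuller" by simp
    hence "\<exists>F c. t = (\<Sum>s\<in>F. of_int (c s) * s) \<and> finite F \<and> F \<subseteq> teichmuller"
      by (intro exI[of _ "{t}"] exI[of _ "\<lambda>_. 1"])
    hence "t \<in> int_span teichmuller" unfolding int_span_def by (simp only: mem_Collect_eq)
    thus "t \<in> Rs l" using assms(6) unfolding teich_subring_def by simp
  qed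
  have chain: "k \<le> l \<Longrightarrow> Rs l \<subseteq> Rs (l - k)" for k
  proof (induction k)
    case 0 thus ?case by simp
  next
    case (Suc k)
    have kl: "k \<le> l" "Suc k \<le> l" using Suc.prems by auto
    hence i: "l - k \<in> {1..l}" by auto
    have a: "Rs (l - k) \<subseteq> Rs (l - k - 1)" using bspec[OF assms(8) i] .
    have b: "Rs l \<subseteq> Rs (l - k)" by (rule Suc.IH[OF kl(1)])
    have "Rs l \<subseteq> Rs (l - k - 1)" by (rule order_trans[OF b a])
    thus ?case by simp
  qed
  have tR: "teichmuller \<subseteq> Rs i" if "i \<le> l" for i
    using chain[of "l - i"] that tl by auto
  have sub: "is_subring (Rs i)" if "i \<le> l" for i using assms(7) that by blast
  have cpos: "card (Rs i) > 0" if "i \<le> l" for i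
    using sub_1[OF sub[OF that]] by (auto simp: card_gt_0_iff)
  have P1: "(\<forall>i\<in>{1..l}. maximal_subring (Rs i) (Rs (i - 1)))
            \<longleftrightarrow> (\<forall>i\<in>{1..l}. add_index (Rs (i - 1)) (Rs i) = q)"
  proof
    assume m: "\<forall>i\<in>{1..l}. maximal_subring (Rs i) (Rs (i - 1))"
    show "\<forall>i\<in>{1..l}. add_index (Rs (i - 1)) (Rs i) = q"
    proof
      fix i assume i: "i \<in> {1..l}"
      have "card (Rs (i - 1)) = card (Rs i) * q"
        using maximal_props[OF loc pp ch m[rule_format, OF i] tR] i qA by auto
      thus "add_index (Rs (i - 1)) (Rs i) = q" unfolding add_index_def using cpos[of i] i by simp
    qed
  next
    assume m: "\<forall>i\<in>{1..l}. add_index (Rs (i - 1)) (Rs i) = q"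
    show "\<forall>i\<in>{1..l}. maximal_subring (Rs i) (Rs (i - 1))"
    proof
      fix i assume i: "i \<in> {1..l}"
      have il: "i \<le> l" "i - 1 \<le> l" using i by auto
      have "card (Rs (i - 1)) div card (Rs i) = card (insert 0 teichmuller :: 'a set)"
        using m i qA unfolding add_index_def by simp
      thus "maximal_subring (Rs i) (Rs (i - 1))"
        using index_maximal[OF loc pp ch sub[OF il(1)] sub[OF il(2)] _ tR[OF il(1)]] assms(8) i
        by blast

    qed
  qed
  have P2: "\<forall>k\<le>l. \<forall>x. of_nat (p ^ k) * x \<in> Rs k"
    if m: "\<forall>i\<in>{1..l}. maximal_subring (Rs i) (Rs (i - 1))"
  proof -
    have "k \<le> l \<longrightarrow> (\<forall>x. of_nat (p ^ k) * x \<in> Rs k)" for k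
    proof (induction k)
      case 0 thus ?case using assms(5) by simp
    next
      case (Suc k)
      show ?case
      proof (intro impI allI)
        fix x :: 'a assume k: "Suc k \<le> l"
        have y: "of_nat (p ^ k) * x \<in> Rs k" using Suc k by simp
        have "Suc k \<in> {1..l}" using k by simp
        hence "maximal_subring (Rs (Suc k)) (Rs (Suc k - 1))" using m by blast
        hence ms: "maximal_subring (Rs (Suc k)) (Rs k)" by simp
        have "\<forall>y\<in>Rs k. of_nat p * y \<in> Rs (Suc k)"
          using maximal_props[OF loc pp ch ms tR[OF k]] by blast
        hence "of_nat p * (of_nat (p ^ k) * x) \<in> Rs (Suc k)" using y by blast
        thus "of_nat (p ^ Suc k) * x \<in> Rs (Suc k)" by (simp add: mult.assoc)
      qed
    qed
    thus ?thesis by blast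
  qed
  show ?thesis using P1 P2 by blast
qed


end
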